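(* (Quantum Efron–Stein inequality.) Let $\varrho=\rho_1\otimes\cdots\otimes\rho_n$ be a product state on $\mathcal K=\bigotimes_{i=1}^n\mathcal H_i$ (finite-dimensional Hilbert spaces) and let $X$ be an observable on $\mathcal K$. Then $$\mathrm{Var}_\varrho[X]\le\sum_{i=1}^n\mathbb E_\varrho[(\mathcal D_iX)^2].$$
   Context: $\mathbb E_\varrho[Y]=\mathrm{Tr}[\varrho Y]$ and $\mathrm{Var}_\varrho[X]=\mathbb E_\varrho[X^2]-\mathbb E_\varrho[X]^2$. For $i\in[n]$, $\mathcal E_iX=\mathrm{Tr}_i[(\rho_i\otimes I)X]$, regarded as an operator on $\mathcal K$ by tensoring with the identity on $\mathcal H_i$ (so $\mathcal E_i(Y_1\otimes\cdots\otimes Y_n)=\mathrm{Tr}[\rho_iY_i]\,Y_1\otimes\cdots\otimes I\otimes\cdots\otimes Y_n$ with $I$ in position $i$), and $\mathcal D_iX=X-\mathcal E_iX$. *)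

theory Defs
  imports Complex_Main "HOL-Library.FuncSet"
begin

text \<open>Finite-dimensional Hilbert spaces H_i = C^(d i), i < n. The tensor product
  K = H_0 (x) ... (x) H_(n-1) has the product basis indexed by multi-indices
  x with x i < d i for i < n (extensional: x i = undefined for i >= n).
  Operators on K are given by their matrix entries X x y w.r.t. that basis.\<close>

type_synonym kop = "(nat \<Rightarrow> nat) \<Rightarrow> (nat \<Rightarrow> nat) \<Rightarrow> complex"

definition basis :: "nat \<Rightarrow> (nat \<Rightarrow> nat) \<Rightarrow> (nat \<Rightarrow> nat) set" where
  "basis n d = Pi\<^sub>E {..<n} (\<lambda>i. {..<d i})"

definition kmult :: "nat \<Rightarrow> (nat \<Rightarrow> nat) \<Rightarrow> kop \<Rightarrow> kop \<Rightarrow> kop" where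
  "kmult n d A B = (\<lambda>x y. \<Sum>z\<in>basis n d. A x z * B z y)"

definition ktrace :: "nat \<Rightarrow> (nat \<Rightarrow> nat) \<Rightarrow> kop \<Rightarrow> complex" where
  "ktrace n d A = (\<Sum>x\<in>basis n d. A x x)"

definition khermitian :: "nat \<Rightarrow> (nat \<Rightarrow> nat) \<Rightarrow> kop \<Rightarrow> bool" where
  "khermitian n d X = (\<forall>x\<in>basis n d. \<forall>y\<in>basis n d. X x y = cnj (X y x))"

definition density_matrix :: "nat \<Rightarrow> (nat \<Rightarrow> nat \<Rightarrow> complex) \<Rightarrow> bool" where
  "density_matrix m r =
     ((\<forall>a<m. \<forall>b<m. r a b = cnj (r b a)) \<and>
      (\<forall>v :: nat \<Rightarrow> complex. 0 \<le> Re (\<Sum>a<m. \<Sum>b<m. cnj (v a) * r a b * v b)) \<and>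
      (\<Sum>a<m. r a a) = 1)"

definition prod_state :: "nat \<Rightarrow> (nat \<Rightarrow> nat \<Rightarrow> nat \<Rightarrow> complex) \<Rightarrow> kop" where
  "prod_state n \<rho> = (\<lambda>x y. \<Prod>i<n. \<rho> i (x i) (y i))"

definition expect :: "nat \<Rightarrow> (nat \<Rightarrow> nat) \<Rightarrow> kop \<Rightarrow> kop \<Rightarrow> complex" where
  "expect n d \<sigma> Y = ktrace n d (kmult n d \<sigma> Y)"

definition variance :: "nat \<Rightarrow> (nat \<Rightarrow> nat) \<Rightarrow> kop \<Rightarrow> kop \<Rightarrow> complex" where
  "variance n d \<sigma> X = expect n d \<sigma> (kmult n d X X) - (expect n d \<sigma> X)^2"

text \<open>E_i X = Tr_i[(rho_i (x) I) X], tensored with the identity on H_i: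
  (E_i X)(x,y) = [x i = y i] * sum_(a,b) rho_i(a,b) X(x[i:=b], y[i:=a]).\<close>
definition cond_exp :: "(nat \<Rightarrow> nat) \<Rightarrow> (nat \<Rightarrow> nat \<Rightarrow> nat \<Rightarrow> complex) \<Rightarrow> nat \<Rightarrow> kop \<Rightarrow> kop" where
  "cond_exp d \<rho> i X = (\<lambda>x y. if x i = y i
      then (\<Sum>a<d i. \<Sum>b<d i. \<rho> i a b * X (x(i := b)) (y(i := a))) else 0)"

definition diff_op :: "(nat \<Rightarrow> nat) \<Rightarrow> (nat \<Rightarrow> nat \<Rightarrow> nat \<Rightarrow> complex) \<Rightarrow> nat \<Rightarrow> kop \<Rightarrow> kop" where
  "diff_op d \<rho> i X = (\<lambda>x y. X x y - cond_exp d \<rho> i X x y)"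

end

theory Submission
  imports Defs "HOL-Library.FuncSet"
begin

lemma sum_PiE_insert:
  assumes "i \<notin> S"
  shows "(\<Sum>x\<in>PiE (insert i S) T. G x) = (\<Sum>c\<in>T i. \<Sum>z\<in>PiE S T. G (z(i:=c)))"
proof -
  have "sum G (PiE (insert i S) T) = sum G ((\<lambda>(y,g). g(i:=y)) ` (T i \<times> PiE S T))"
    by (simp add: PiE_insert_eq)
  also have "\<dots> = sum (G \<circ> (\<lambda>(y,g). g(i:=y))) (T i \<times> PiE S T)"
    by (rule sum.reindex[OF inj_combinator[OF assms]])
  also have "\<dots> = (\<Sum>c\<in>T i. \<Sum>z\<in>PiE S T. G (z(i:=c)))"
    by (simp add: sum.cartesian_product case_prod_unfold comp_def)
  finally show ?thesis .
qed

lemma sum_single: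
  assumes "finite A" "cc \<in> A" "\<And>c. c \<in> A \<Longrightarrow> c \<noteq> cc \<Longrightarrow> f c = 0"
  shows "sum f A = f cc"
proof -
  have "sum f A = f cc + sum f (A - {cc})" using assms(1,2) by (rule sum.remove)
  also have "sum f (A - {cc}) = 0" using assms by (intro sum.neutral) auto
  finally show ?thesis by simp
qed

lemma sum_rot3: "(\<Sum>a\<in>A. \<Sum>b\<in>B. \<Sum>c\<in>C. f a b c) = (\<Sum>c\<in>C. \<Sum>a\<in>A. \<Sum>b\<in>B. f a b c)"
proof -
  have "(\<Sum>a\<in>A. \<Sum>b\<in>B. \<Sum>c\<in>C. f a b c) = (\<Sum>a\<in>A. \<Sum>c\<in>C. \<Sum>b\<in>B. f a b c)"
    by (rule sum.cong[OF refl], rule sum.swap)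
  also have "\<dots> = (\<Sum>c\<in>C. \<Sum>a\<in>A. \<Sum>b\<in>B. f a b c)" by (rule sum.swap)
  finally show ?thesis .
qed

lemma sum_swap22: "(\<Sum>a\<in>A. \<Sum>b\<in>B. \<Sum>c\<in>C. \<Sum>e\<in>D. f a b c e) = (\<Sum>c\<in>C. \<Sum>e\<in>D. \<Sum>a\<in>A. \<Sum>b\<in>B. f a b c e)"
  by (simp only: sum.swap[of _ B C] sum.swap[of _ B D] sum.swap[of _ A C] sum.swap[of _ A D])

definition triv :: "nat \<Rightarrow> kop \<Rightarrow> bool" where
  "triv i A \<longleftrightarrow> (\<forall>x y. x i \<noteq> y i \<longrightarrow> A x y = 0) \<and>
     (\<forall>x y b c. A (x(i:=b)) (y(i:=b)) = A (x(i:=c)) (y(i:=c)))"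

locale qes =
  fixes n :: nat and d :: "nat \<Rightarrow> nat" and \<rho> :: "nat \<Rightarrow> nat \<Rightarrow> nat \<Rightarrow> complex"
  assumes states: "\<forall>i<n. density_matrix (d i) (\<rho> i)"
begin

abbreviation "B \<equiv> basis n d"
abbreviation "Bm i \<equiv> PiE ({..<n} - {i}) (\<lambda>j. {..<d j})"
abbreviation "E i \<equiv> cond_exp d \<rho> i"

definition R :: "nat \<Rightarrow> (nat\<Rightarrow>nat) \<Rightarrow> (nat\<Rightarrow>nat) \<Rightarrow> complex" where
  "R i z w = (\<Prod>j\<in>{..<n}-{i}. \<rho> j (z j) (w j))"

lemma herm: "i<n \<Longrightarrow> a<d i \<Longrightarrow> b<d i \<Longrightarrow> \<rho> i a b = cnj (\<rho> i b a)"
  using states unfolding density_matrix_def by blast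
lemma tr1: "i<n \<Longrightarrow> (\<Sum>a<d i. \<rho> i a a) = 1"
  using states unfolding density_matrix_def by blast
lemma psd: "i<n \<Longrightarrow> 0 \<le> Re (\<Sum>a<d i. \<Sum>b<d i. cnj (v a) * \<rho> i a b * v b)"
  using states unfolding density_matrix_def by blast

lemma finB: "finite B" by (simp add: basis_def finite_PiE)
lemma finBm: "finite (Bm i)" by (simp add: finite_PiE)

lemma sum_B_split: "i<n \<Longrightarrow> (\<Sum>x\<in>B. G x) = (\<Sum>c<d i. \<Sum>z\<in>Bm i. G (z(i:=c)))"
proof -
  assume i: "i<n"
  have s: "{..<n} = insert i ({..<n}-{i})" using i by auto
  have eq: "B = PiE (insert i ({..<n}-{i})) (\<lambda>j. {..<d j})"
    using arg_cong[OF s, of "\<lambda>S. PiE S (\<lambda>j. {..<d j})"] by (simp only: basis_def)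
  show ?thesis unfolding eq by (rule sum_PiE_insert) simp
qed

lemma rho_split: "i<n \<Longrightarrow> prod_state n \<rho> (z(i:=c)) (w(i:=c')) = \<rho> i c c' * R i z w"
proof -
  assume i: "i<n"
  have "prod_state n \<rho> (z(i:=c)) (w(i:=c')) = \<rho> i c c' * (\<Prod>j\<in>{..<n}-{i}. \<rho> j ((z(i:=c)) j) ((w(i:=c')) j))"
    unfolding prod_state_def using i by (simp add: prod.remove[of "{..<n}" i])
  also have "(\<Prod>j\<in>{..<n}-{i}. \<rho> j ((z(i:=c)) j) ((w(i:=c')) j)) = R i z w"
    unfolding R_def by (rule prod.cong) auto
  finally show ?thesis .
qed

lemma expect_eq: "expect n d \<sigma> Y = (\<Sum>x\<in>B. \<Sum>z\<in>B. \<sigma> x z * Y z x)"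
  by (simp add: expect_def ktrace_def kmult_def)

lemma cond_idem: "i<n \<Longrightarrow> E i (E i Y) = E i Y"
proof (intro ext)
  fix x y assume i: "i<n"
  show "E i (E i Y) x y = E i Y x y"
  proof (cases "x i = y i")
    case True
    let ?G = "\<Sum>a<d i. \<Sum>b<d i. \<rho> i a b * Y (x(i := b)) (y(i := a))"
    have "E i (E i Y) x y = (\<Sum>a<d i. \<Sum>b<d i. \<rho> i a b * (if b = a then ?G else 0))"
      using True by (simp add: cond_exp_def cong: if_cong)
    also have "\<dots> = (\<Sum>a<d i. \<rho> i a a * ?G)"
    proof (rule sum.cong[OF refl])
      fix a assume "a \<in> {..<d i}"
      then show "(\<Sum>b<d i. \<rho> i a b * (if b = a then ?G else 0)) = \<rho> i a a * ?G"
        by (subst sum_single[where cc=a]) auto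
    qed
    also have "\<dots> = ?G" using tr1[OF i] by (simp add: sum_distrib_right[symmetric])
    finally show ?thesis using True by (simp add: cond_exp_def)
  qed (simp add: cond_exp_def)
qed

lemma cond_comm: "i \<noteq> j \<Longrightarrow> E i (E j Y) = E j (E i Y)"
proof (intro ext)
  fix x y assume ij: "i \<noteq> j"
  have tw: "\<And>x b c. x(i:=b, j:=c) = x(j:=c, i:=b)" using ij by (simp add: fun_upd_twist)
  have s1: "\<And>a b a' b'. \<rho> i a b * (\<rho> j a' b' * Y (x(i:=b, j:=b')) (y(i:=a, j:=a'))) = \<rho> i a b * \<rho> j a' b' * Y (x(i:=b, j:=b')) (y(i:=a, j:=a'))"
    by (simp only: mult.assoc)
  have s2: "\<And>a b a' b'. \<rho> j a' b' * (\<rho> i a b * Y (x(j:=b', i:=b)) (y(j:=a', i:=a))) = \<rho> i a b * \<rho> j a' b' * Y (x(i:=b, j:=b')) (y(i:=a, j:=a'))"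
    by (simp only: tw mult.assoc mult.left_commute)
  have "E i (E j Y) x y = (if x i = y i \<and> x j = y j then
     (\<Sum>a<d i. \<Sum>b<d i. \<Sum>a'<d j. \<Sum>b'<d j. \<rho> i a b * \<rho> j a' b' * Y (x(i:=b, j:=b')) (y(i:=a, j:=a'))) else 0)"
    using ij by (simp add: cond_exp_def sum_distrib_left s1)
  also have "\<dots> = (if x i = y i \<and> x j = y j then
     (\<Sum>a'<d j. \<Sum>b'<d j. \<Sum>a<d i. \<Sum>b<d i. \<rho> i a b * \<rho> j a' b' * Y (x(i:=b, j:=b')) (y(i:=a, j:=a'))) else 0)"
    by (simp only: sum_swap22[of _ "{..<d i}"])
  also have "\<dots> = E j (E i Y) x y"
    using ij by (simp add: cond_exp_def sum_distrib_left s2)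
  finally show "E i (E j Y) x y = E j (E i Y) x y" .
qed

lemma cond_diff: "E i (\<lambda>x y. A x y - C x y) = (\<lambda>x y. E i A x y - E i C x y)"
  by (intro ext) (simp add: cond_exp_def sum_subtractf algebra_simps)

lemma triv_cond: "triv i (E i Y)"
  by (simp add: triv_def cond_exp_def)

lemma triv_cond_other:
  assumes ij: "i \<noteq> j" and t: "triv i A" shows "triv i (E j A)"
proof -
  have tw: "\<And>x b c. x(i:=b, j:=c) = x(j:=c, i:=b)" using ij by (simp add: fun_upd_twist)
  have t1: "\<And>x y. x i \<noteq> y i \<Longrightarrow> A x y = 0" and
       t2: "\<And>x y b c. A (x(i:=b)) (y(i:=b)) = A (x(i:=c)) (y(i:=c))" using t by (auto simp: triv_def)
  show ?thesis unfolding triv_def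
  proof safe
    fix x y :: "nat \<Rightarrow> nat" assume "x i \<noteq> y i"
    then show "E j A x y = 0" using ij by (simp add: cond_exp_def t1)
  next
    fix x y :: "nat \<Rightarrow> nat" and b c
    show "E j A (x(i:=b)) (y(i:=b)) = E j A (x(i:=c)) (y(i:=c))"
    proof -
      have "\<And>a b'. A (x(i:=b, j:=b')) (y(i:=b, j:=a)) = A (x(i:=c, j:=b')) (y(i:=c, j:=a))"
        unfolding tw by (rule t2)
      then show ?thesis using ij by (simp add: cond_exp_def)
    qed
  qed
qed

lemma triv_diff: "triv i A \<Longrightarrow> triv i C \<Longrightarrow> triv i (\<lambda>x y. A x y - C x y)"
proof -
  assume a: "triv i A" and c: "triv i C"
  have "\<And>x y b cc. A (x(i:=b)) (y(i:=b)) = A (x(i:=cc)) (y(i:=cc))"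
       "\<And>x y b cc. C (x(i:=b)) (y(i:=b)) = C (x(i:=cc)) (y(i:=cc))"
       "\<And>x y. x i \<noteq> y i \<Longrightarrow> A x y = 0" "\<And>x y. x i \<noteq> y i \<Longrightarrow> C x y = 0"
    using a c unfolding triv_def by blast+
  note h = this
  show ?thesis unfolding triv_def
  proof (intro conjI allI impI)
    fix x y :: "nat\<Rightarrow>nat" assume "x i \<noteq> y i" then show "A x y - C x y = 0" using h by simp
  next
    fix x y :: "nat\<Rightarrow>nat" and b c
    show "A (x(i:=b)) (y(i:=b)) - C (x(i:=b)) (y(i:=b)) = A (x(i:=c)) (y(i:=c)) - C (x(i:=c)) (y(i:=c))"
      using h(1)[of x b y c] h(2)[of x b y c] by simp
  qed
qed

end
context qes begin

lemma inB: "x \<in> B \<Longrightarrow> i<n \<Longrightarrow> x i < d i"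
  by (auto simp: basis_def PiE_iff)

lemma upd_inB: "z \<in> Bm i \<Longrightarrow> i<n \<Longrightarrow> c < d i \<Longrightarrow> z(i:=c) \<in> B"
  by (auto simp: basis_def PiE_iff extensional_def)

lemma upd_inB2: "x \<in> B \<Longrightarrow> i<n \<Longrightarrow> c < d i \<Longrightarrow> x(i:=c) \<in> B"
  by (auto simp: basis_def PiE_iff extensional_def)

lemma cond_mult_left:
  assumes i: "i<n" and t: "triv i A" and x: "x\<in>B" and y: "y\<in>B"
  shows "E i (kmult n d A Y) x y = kmult n d A (E i Y) x y"
proof -
  have t1: "\<And>x y. x i \<noteq> y i \<Longrightarrow> A x y = 0" and
       t2: "\<And>x y b c. A (x(i:=b)) (y(i:=b)) = A (x(i:=c)) (y(i:=c))" using t by (auto simp: triv_def)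
  have xi: "x i < d i" using inB[OF x i] .
  show ?thesis
  proof (cases "x i = y i")
    case False
    have "kmult n d A (E i Y) x y = 0" unfolding kmult_def
    proof (rule sum.neutral, rule ballI)
      fix w assume "w \<in> B"
      show "A x w * E i Y w y = 0"
      proof (cases "w i = x i")
        case True then show ?thesis using False by (simp add: cond_exp_def)
      next
        case False then show ?thesis using t1[of x w] by simp
      qed
    qed
    then show ?thesis using False by (simp add: cond_exp_def)
  next
    case True
    let ?K = "\<lambda>a b z. \<rho> i a b * (A x (z(i:=x i)) * Y (z(i:=b)) (y(i:=a)))"
    have inner: "(\<Sum>w\<in>B. A (x(i:=b)) w * Y w (y(i:=a))) = (\<Sum>z\<in>Bm i. A x (z(i:=x i)) * Y (z(i:=b)) (y(i:=a)))"
      if b: "b < d i" for a b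
    proof -
      have "(\<Sum>w\<in>B. A (x(i:=b)) w * Y w (y(i:=a))) = (\<Sum>c<d i. \<Sum>z\<in>Bm i. A (x(i:=b)) (z(i:=c)) * Y (z(i:=c)) (y(i:=a)))"
        by (rule sum_B_split[OF i])
      also have "\<dots> = (\<Sum>z\<in>Bm i. A (x(i:=b)) (z(i:=b)) * Y (z(i:=b)) (y(i:=a)))"
        by (rule sum_single) (use b t1 in auto)
      also have "\<dots> = (\<Sum>z\<in>Bm i. A x (z(i:=x i)) * Y (z(i:=b)) (y(i:=a)))"
        using t2[of x b _ "x i"] by simp
      finally show ?thesis .
    qed
    have "E i (kmult n d A Y) x y = (\<Sum>a<d i. \<Sum>b<d i. \<rho> i a b * (\<Sum>w\<in>B. A (x(i:=b)) w * Y w (y(i:=a))))"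
      using True by (simp add: cond_exp_def kmult_def)
    also have "\<dots> = (\<Sum>a<d i. \<Sum>b<d i. \<Sum>z\<in>Bm i. ?K a b z)"
      by (simp add: inner sum_distrib_left)
    finally have L: "E i (kmult n d A Y) x y = (\<Sum>a<d i. \<Sum>b<d i. \<Sum>z\<in>Bm i. ?K a b z)" .
    have "kmult n d A (E i Y) x y = (\<Sum>c<d i. \<Sum>z\<in>Bm i. A x (z(i:=c)) * E i Y (z(i:=c)) y)"
      unfolding kmult_def by (rule sum_B_split[OF i])
    also have "\<dots> = (\<Sum>z\<in>Bm i. A x (z(i:=x i)) * E i Y (z(i:=x i)) y)"
      by (rule sum_single) (use xi t1 in auto)
    also have "\<dots> = (\<Sum>z\<in>Bm i. \<Sum>a<d i. \<Sum>b<d i. ?K a b z)"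
      using True by (simp add: cond_exp_def sum_distrib_left mult.left_commute)
    also have "\<dots> = (\<Sum>a<d i. \<Sum>b<d i. \<Sum>z\<in>Bm i. ?K a b z)"
      by (rule sum_rot3[symmetric])
    finally show ?thesis using L by simp
  qed
qed

lemma cond_mult_right:
  assumes i: "i<n" and t: "triv i A" and x: "x\<in>B" and y: "y\<in>B"
  shows "E i (kmult n d Y A) x y = kmult n d (E i Y) A x y"
proof -
  have t1: "\<And>x y. x i \<noteq> y i \<Longrightarrow> A x y = 0" and
       t2: "\<And>x y b c. A (x(i:=b)) (y(i:=b)) = A (x(i:=c)) (y(i:=c))" using t by (auto simp: triv_def)
  have yi: "y i < d i" using inB[OF y i] .
  show ?thesis
  proof (cases "x i = y i")
    case False
    have "kmult n d (E i Y) A x y = 0" unfolding kmult_def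
    proof (rule sum.neutral, rule ballI)
      fix w assume "w \<in> B"
      show "E i Y x w * A w y = 0"
      proof (cases "w i = y i")
        case True then show ?thesis using False by (simp add: cond_exp_def)
      next
        case False then show ?thesis using t1[of w y] by simp
      qed
    qed
    then show ?thesis using False by (simp add: cond_exp_def)
  next
    case True
    let ?K = "\<lambda>a b z. \<rho> i a b * (Y (x(i:=b)) (z(i:=a)) * A (z(i:=y i)) y)"
    have inner: "(\<Sum>w\<in>B. Y (x(i:=b)) w * A w (y(i:=a))) = (\<Sum>z\<in>Bm i. Y (x(i:=b)) (z(i:=a)) * A (z(i:=y i)) y)"
      if a: "a < d i" for a b
    proof -
      have "(\<Sum>w\<in>B. Y (x(i:=b)) w * A w (y(i:=a))) = (\<Sum>c<d i. \<Sum>z\<in>Bm i. Y (x(i:=b)) (z(i:=c)) * A (z(i:=c)) (y(i:=a)))"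
        by (rule sum_B_split[OF i])
      also have "\<dots> = (\<Sum>z\<in>Bm i. Y (x(i:=b)) (z(i:=a)) * A (z(i:=a)) (y(i:=a)))"
        by (rule sum_single) (use a t1 in auto)
      also have "\<dots> = (\<Sum>z\<in>Bm i. Y (x(i:=b)) (z(i:=a)) * A (z(i:=y i)) y)"
        using t2[of _ a y "y i"] by simp
      finally show ?thesis .
    qed
    have "E i (kmult n d Y A) x y = (\<Sum>a<d i. \<Sum>b<d i. \<rho> i a b * (\<Sum>w\<in>B. Y (x(i:=b)) w * A w (y(i:=a))))"
      using True by (simp add: cond_exp_def kmult_def)
    also have "\<dots> = (\<Sum>a<d i. \<Sum>b<d i. \<Sum>z\<in>Bm i. ?K a b z)"
      by (simp add: inner sum_distrib_left)
    finally have L: "E i (kmult n d Y A) x y = (\<Sum>a<d i. \<Sum>b<d i. \<Sum>z\<in>Bm i. ?K a b z)" .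
    have "kmult n d (E i Y) A x y = (\<Sum>c<d i. \<Sum>z\<in>Bm i. E i Y x (z(i:=c)) * A (z(i:=c)) y)"
      unfolding kmult_def by (rule sum_B_split[OF i])
    also have "\<dots> = (\<Sum>z\<in>Bm i. E i Y x (z(i:=y i)) * A (z(i:=y i)) y)"
      by (rule sum_single) (use yi t1 in auto)
    also have "\<dots> = (\<Sum>z\<in>Bm i. \<Sum>a<d i. \<Sum>b<d i. ?K a b z)"
      using True by (simp add: cond_exp_def sum_distrib_right mult.assoc)
    also have "\<dots> = (\<Sum>a<d i. \<Sum>b<d i. \<Sum>z\<in>Bm i. ?K a b z)"
      by (rule sum_rot3[symmetric])
    finally show ?thesis using L by simp
  qed
qed

lemma sum_reorder: "(\<Sum>c\<in>C. \<Sum>u\<in>U. \<Sum>c'\<in>C'. \<Sum>w\<in>W. f c u c' w) = (\<Sum>u\<in>U. \<Sum>w\<in>W. \<Sum>c\<in>C. \<Sum>c'\<in>C'. f c u c' w)"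
proof -
  have "(\<Sum>c\<in>C. \<Sum>u\<in>U. \<Sum>c'\<in>C'. \<Sum>w\<in>W. f c u c' w) = (\<Sum>c\<in>C. \<Sum>c'\<in>C'. \<Sum>u\<in>U. \<Sum>w\<in>W. f c u c' w)"
    by (rule sum.cong[OF refl], rule sum.swap)
  also have "\<dots> = (\<Sum>u\<in>U. \<Sum>w\<in>W. \<Sum>c\<in>C. \<Sum>c'\<in>C'. f c u c' w)" by (rule sum_swap22)
  finally show ?thesis .
qed

lemma expect_cond: assumes i: "i<n"
  shows "expect n d (prod_state n \<rho>) (E i Y) = expect n d (prod_state n \<rho>) Y"
proof -
  let ?T = "\<Sum>u\<in>Bm i. \<Sum>w\<in>Bm i. \<Sum>c<d i. \<Sum>c'<d i. \<rho> i c c' * R i u w * Y (w(i:=c')) (u(i:=c))"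
  have "expect n d (prod_state n \<rho>) Y = (\<Sum>c<d i. \<Sum>u\<in>Bm i. \<Sum>c'<d i. \<Sum>w\<in>Bm i. \<rho> i c c' * R i u w * Y (w(i:=c')) (u(i:=c)))"
    by (simp add: expect_eq sum_B_split[OF i] rho_split[OF i])
  also have "\<dots> = ?T" by (rule sum_reorder)
  finally have 1: "expect n d (prod_state n \<rho>) Y = ?T" .
  let ?G = "\<lambda>u w. \<Sum>a<d i. \<Sum>b<d i. \<rho> i a b * Y (w(i:=b)) (u(i:=a))"
  have "expect n d (prod_state n \<rho>) (E i Y) = (\<Sum>c<d i. \<Sum>u\<in>Bm i. \<Sum>c'<d i. \<Sum>w\<in>Bm i. \<rho> i c c' * R i u w * (if c' = c then ?G u w else 0))"
    by (simp add: expect_eq sum_B_split[OF i] rho_split[OF i] cond_exp_def cong: if_cong)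
  also have "\<dots> = (\<Sum>u\<in>Bm i. \<Sum>w\<in>Bm i. \<Sum>c<d i. \<Sum>c'<d i. \<rho> i c c' * R i u w * (if c' = c then ?G u w else 0))"
    by (rule sum_reorder)
  also have "\<dots> = (\<Sum>u\<in>Bm i. \<Sum>w\<in>Bm i. \<Sum>c<d i. \<rho> i c c * (R i u w * ?G u w))"
  proof (intro sum.cong refl)
    fix u w c assume "c \<in> {..<d i}"
    then show "(\<Sum>c'<d i. \<rho> i c c' * R i u w * (if c' = c then ?G u w else 0)) = \<rho> i c c * (R i u w * ?G u w)"
      by (subst sum_single[where cc=c]) auto
  qed
  also have "\<dots> = (\<Sum>u\<in>Bm i. \<Sum>w\<in>Bm i. R i u w * ?G u w)"
    by (simp add: sum_distrib_right[symmetric] tr1[OF i])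
  also have "\<dots> = ?T"
    by (simp add: sum_distrib_left mult.left_commute mult.assoc)
  finally show ?thesis using 1 by simp
qed

lemma expect_cong: "(\<And>x y. x\<in>B \<Longrightarrow> y\<in>B \<Longrightarrow> F x y = G x y) \<Longrightarrow> expect n d \<sigma> F = expect n d \<sigma> G"
  by (simp add: expect_eq)

abbreviation "bil F G \<equiv> expect n d (prod_state n \<rho>) (kmult n d F G)"

lemma bil_eq: "bil F G = (\<Sum>x\<in>B. \<Sum>z\<in>B. \<Sum>w\<in>B. prod_state n \<rho> x z * F z w * G w x)"
  by (simp add: expect_eq kmult_def sum_distrib_left mult.assoc)

lemma bil_sum_left: "bil (\<lambda>x y. \<Sum>k\<in>K. F k x y) G = (\<Sum>k\<in>K. bil (F k) G)"
  unfolding bil_eq by (simp add: sum_distrib_left sum_distrib_right sum.swap[of _ B K])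

lemma bil_sum_right: "bil G (\<lambda>x y. \<Sum>k\<in>K. F k x y) = (\<Sum>k\<in>K. bil G (F k))"
  unfolding bil_eq by (simp add: sum_distrib_left sum_distrib_right sum.swap[of _ B K])

lemma bil_add_left: "bil (\<lambda>x y. F x y + H x y) G = bil F G + bil H G"
  unfolding bil_eq by (simp add: algebra_simps sum.distrib)

lemma bil_add_right: "bil G (\<lambda>x y. F x y + H x y) = bil G F + bil G H"
  unfolding bil_eq by (simp add: algebra_simps sum.distrib)

lemma orth:
  assumes k: "k<n" and t: "triv k C" and z: "E k A = (\<lambda>x y. 0)"
  shows "bil A C = 0" "bil C A = 0"
proof -
  have "bil A C = expect n d (prod_state n \<rho>) (E k (kmult n d A C))" by (rule expect_cond[OF k, symmetric])
  also have "\<dots> = expect n d (prod_state n \<rho>) (kmult n d (E k A) C)"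
    by (rule expect_cong, rule cond_mult_right[OF k t])
  also have "\<dots> = 0" by (simp add: z kmult_def expect_eq)
  finally show "bil A C = 0" .
  have "bil C A = expect n d (prod_state n \<rho>) (E k (kmult n d C A))" by (rule expect_cond[OF k, symmetric])
  also have "\<dots> = expect n d (prod_state n \<rho>) (kmult n d C (E k A))"
    by (rule expect_cong, rule cond_mult_left[OF k t])
  also have "\<dots> = 0" by (simp add: z kmult_def expect_eq)
  finally show "bil C A = 0" .
qed

end

definition Qf :: "nat \<Rightarrow> (nat\<Rightarrow>nat\<Rightarrow>complex) \<Rightarrow> (nat\<Rightarrow>complex) \<Rightarrow> complex" where
  "Qf m r v = (\<Sum>a<m. \<Sum>b<m. cnj (v a) * r a b * v b)"

lemma bordered:
  assumes herm: "\<forall>a<Suc m. \<forall>b<Suc m. r a b = cnj (r b a)"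
  shows "Qf (Suc m) r (v(m:=t)) = Qf m r v + t * (\<Sum>a<m. cnj (v a) * r a m) + cnj t * cnj (\<Sum>a<m. cnj (v a) * r a m) + cnj t * t * r m m"
proof -
  have 1: "(\<Sum>b<m. cnj t * r m b * v b) = cnj t * cnj (\<Sum>a<m. cnj (v a) * r a m)"
  proof -
    have "(\<Sum>b<m. cnj t * r m b * v b) = (\<Sum>b<m. cnj t * (v b * cnj (r b m)))"
    proof (rule sum.cong[OF refl])
      fix b assume "b \<in> {..<m}"
      then have "r m b = cnj (r b m)" by (intro herm[rule_format]) auto
      then show "cnj t * r m b * v b = cnj t * (v b * cnj (r b m))" by (simp add: mult.commute)
    qed
    then have "(\<Sum>b<m. cnj t * r m b * v b) = cnj t * (\<Sum>b<m. v b * cnj (r b m))"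
      by (simp add: sum_distrib_left)
    then show ?thesis by (simp add: cnj_sum)
  qed
  have 2: "(\<Sum>a<m. cnj (v a) * r a m * t) = t * (\<Sum>a<m. cnj (v a) * r a m)"
    by (simp add: sum_distrib_left mult.commute)
  have "Qf (Suc m) r (v(m:=t)) = (\<Sum>a<m. (\<Sum>b<m. cnj (v a) * r a b * v b) + cnj (v a) * r a m * t)
          + ((\<Sum>b<m. cnj t * r m b * v b) + cnj t * r m m * t)"
    unfolding Qf_def by (simp add: sum.lessThan_Suc)
  also have "\<dots> = Qf m r v + t * (\<Sum>a<m. cnj (v a) * r a m) + cnj t * cnj (\<Sum>a<m. cnj (v a) * r a m) + cnj t * t * r m m"
    unfolding 1 sum.distrib 2 Qf_def by (simp add: algebra_simps)
  finally show ?thesis .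
qed

lemma Qf_zero: "Qf m r (\<lambda>_. 0) = 0" by (simp add: Qf_def)

lemma chol:
  "(\<forall>a<m. \<forall>b<m. r a b = cnj (r b a)) \<Longrightarrow> (\<forall>v. 0 \<le> Re (Qf m r v)) \<Longrightarrow>
    \<exists>u. \<forall>a<m. \<forall>b<m. r a b = (\<Sum>l<m. u l a * cnj (u l b))"
proof (induction m arbitrary: r)
  case 0 then show ?case by simp
next
  case (Suc m)
  have herm: "\<forall>a<Suc m. \<forall>b<Suc m. r a b = cnj (r b a)" using Suc.prems(1) .
  have psd: "\<And>v. 0 \<le> Re (Qf (Suc m) r v)" using Suc.prems(2) by blast
  define p where "p = r m m"
  have "r m m = cnj (r m m)" by (intro herm[rule_format]) auto
  then have pr: "cnj p = p" unfolding p_def by simp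
  then have pim: "Im p = 0" by (metis cnj.simps(2) neg_equal_zero)
  have "Qf (Suc m) r ((\<lambda>_. 0)(m:=1)) = p"
    using bordered[OF herm, of "\<lambda>_. 0" 1] by (simp add: Qf_zero p_def)
  then have pre: "0 \<le> Re p" using psd by metis
  define S where "S v = (\<Sum>a<m. cnj (v a) * r a m)" for v
  have bord: "Qf (Suc m) r (v(m:=t)) = Qf m r v + t * S v + cnj t * cnj (S v) + cnj t * t * p" for v t
    unfolding S_def p_def by (rule bordered[OF herm])
  obtain w where wA: "\<forall>a\<le>m. r a m = w a * cnj (w m)"
    and wB: "\<forall>v. 0 \<le> Re (Qf m (\<lambda>a b. r a b - w a * cnj (w b)) v)"
  proof (cases "p = 0")
    case True
    have z: "r a m = 0" if a: "a < m" for a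
    proof (rule ccontr)
      assume nz: "r a m \<noteq> 0"
      define v where "v = (\<lambda>k. if k = a then (1::complex) else 0)"
      have Sv: "S v = r a m" unfolding S_def v_def using a
        by (subst sum_single[where cc=a]) auto
      define s where "s = r a m"
      have sn: "0 < cmod s" using nz s_def by simp
      define lam where "lam = (\<bar>Re (Qf m r v)\<bar> + 1) / (2 * (cmod s)^2)"
      define t where "t = - complex_of_real lam * cnj s"
      have "0 \<le> Re (Qf (Suc m) r (v(m:=t)))" using psd by blast
      also have "Re (Qf (Suc m) r (v(m:=t))) = Re (Qf m r v) - 2 * lam * (cmod s)^2"
      proof -
        have n2: "s * cnj s = complex_of_real ((cmod s)^2)" by (rule complex_norm_square[symmetric])
        have n1: "cnj s * s = complex_of_real ((cmod s)^2)" using n2 by (simp only: mult.commute)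
        have ts: "t * s + cnj t * cnj s = - complex_of_real (2 * lam * (cmod s)^2)"
          unfolding t_def using n1 n2 by (simp add: algebra_simps)
        have "Qf (Suc m) r (v(m:=t)) = Qf m r v + (t * s + cnj t * cnj s)"
          using bord[of v t] True Sv s_def by (simp add: add.assoc)
        then show ?thesis unfolding ts by simp
      qed
      also have "2 * lam * (cmod s)^2 = \<bar>Re (Qf m r v)\<bar> + 1" unfolding lam_def using sn by simp
      finally show False by linarith
    qed
    show ?thesis
    proof (rule that[of "\<lambda>_. 0"])
      show "\<forall>a\<le>m. r a m = 0 * cnj 0" using z True p_def by (auto simp: le_less)
      show "\<forall>v. 0 \<le> Re (Qf m (\<lambda>a b. r a b - 0 * cnj 0) v)"
      proof
        fix v
        have "Qf (Suc m) r (v(m:=0)) = Qf m r v" using bord[of v 0] True by simp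
        then show "0 \<le> Re (Qf m (\<lambda>a b. r a b - 0 * cnj 0) v)" using psd[of "v(m:=0)"] by simp
      qed
    qed
  next
    case False
    have pp: "0 < Re p" using pre False pim complex_eq_iff by (metis less_eq_real_def zero_complex.simps)
    define sp where "sp = sqrt (Re p)"
    have sp: "0 < sp" "sp * sp = Re p" unfolding sp_def using pp by auto
    have pof: "p = complex_of_real (Re p)" using pim complex_eq_iff by simp
    define w where "w a = r a m / complex_of_real sp" for a
    show ?thesis
    proof (rule that[of w])
      show "\<forall>a\<le>m. r a m = w a * cnj (w m)"
      proof (intro allI impI)
        fix a assume "a \<le> m"
        have "w a * cnj (w m) = r a m * cnj p / complex_of_real (sp * sp)"
          unfolding w_def p_def by simp
        also have "\<dots> = r a m"
        proof -
          have cp: "cnj p = complex_of_real (sp * sp)" using pr pof sp(2) by metis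
          have "complex_of_real (sp * sp) \<noteq> 0" using sp(1) by simp
          then show ?thesis unfolding cp by simp
        qed
        finally show "r a m = w a * cnj (w m)" by simp
      qed
      show "\<forall>v. 0 \<le> Re (Qf m (\<lambda>a b. r a b - w a * cnj (w b)) v)"
      proof
        fix v
        define t where "t = - cnj (S v) / p"
        have "Qf m (\<lambda>a b. r a b - w a * cnj (w b)) v = Qf m r v - (\<Sum>a<m. cnj (v a) * w a) * (\<Sum>b<m. cnj (w b) * v b)"
          unfolding Qf_def by (simp add: algebra_simps sum_subtractf sum_distrib_left sum_distrib_right)
        also have "(\<Sum>a<m. cnj (v a) * w a) = S v / complex_of_real sp"
          unfolding S_def w_def by (simp add: sum_divide_distrib)
        also have "(\<Sum>b<m. cnj (w b) * v b) = cnj (S v) / complex_of_real sp"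
          unfolding S_def w_def by (simp add: sum_divide_distrib cnj_sum mult.commute)
        also have "Qf m r v - S v / complex_of_real sp * (cnj (S v) / complex_of_real sp) = Qf (Suc m) r (v(m:=t))"
        proof -
          have "complex_of_real sp * complex_of_real sp = p" using sp pof by (metis of_real_mult)
          then have e: "S v / complex_of_real sp * (cnj (S v) / complex_of_real sp) = S v * cnj (S v) / p"
            by (simp add: field_simps)
          have cp: "cnj t = - S v / p" unfolding t_def using pr by simp
          have "Qf (Suc m) r (v(m:=t)) = Qf m r v + t * S v + cnj t * cnj (S v) + cnj t * t * p" by (rule bord)
          also have "\<dots> = Qf m r v - S v * cnj (S v) / p"
            unfolding cp unfolding t_def using False by (simp add: field_simps)
          finally show ?thesis using e by simp
        qed
        finally show "0 \<le> Re (Qf m (\<lambda>a b. r a b - w a * cnj (w b)) v)" using psd by simp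
      qed
    qed
  qed
  define r' where "r' a b = r a b - w a * cnj (w b)" for a b
  have h': "\<forall>a<m. \<forall>b<m. r' a b = cnj (r' b a)"
  proof (intro allI impI)
    fix a b assume "a < m" "b < m"
    then have "r a b = cnj (r b a)" by (intro herm[rule_format]) auto
    then show "r' a b = cnj (r' b a)" unfolding r'_def by simp
  qed
  have p': "\<forall>v. 0 \<le> Re (Qf m r' v)" using wB unfolding r'_def by simp
  obtain u' where u': "\<forall>a<m. \<forall>b<m. r' a b = (\<Sum>l<m. u' l a * cnj (u' l b))"
    using Suc.IH[OF h' p'] by blast
  define u where "u l = (if l < m then (\<lambda>a. if a < m then u' l a else 0) else w)" for l
  have "r a b = (\<Sum>l<Suc m. u l a * cnj (u l b))" if a: "a < Suc m" and b: "b < Suc m" for a b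
  proof -
    have us: "(\<Sum>l<Suc m. u l a * cnj (u l b)) = (\<Sum>l<m. (if a < m then u' l a else 0) * cnj (if b < m then u' l b else 0)) + w a * cnj (w b)"
      by (simp add: sum.lessThan_Suc u_def)
    show ?thesis
    proof (cases "a < m \<and> b < m")
      case True
      have e: "r a b - w a * cnj (w b) = (\<Sum>l<m. u' l a * cnj (u' l b))" using u' True unfolding r'_def by blast
      have "(\<Sum>l<Suc m. u l a * cnj (u l b)) = (\<Sum>l<m. u' l a * cnj (u' l b)) + w a * cnj (w b)"
        using us True by simp
      then show ?thesis using e by (metis diff_add_cancel)
    next
      case False
      then have "a = m \<or> b = m" using a b by auto
      then show ?thesis
      proof
        assume "b = m" then show ?thesis using us wA a by simp
      next
        assume am: "a = m"
        show ?thesis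
        proof (cases "b = m")
          case True then show ?thesis using us wA am by simp
        next
          case False
          then have "b < m" using b by simp
          have "r a b = cnj (r b a)" using a b by (intro herm[rule_format])
          also have "\<dots> = cnj (r b m)" using am by simp
          also have "\<dots> = cnj (w b * cnj (w m))" using wA b by simp
          finally show ?thesis using us am \<open>b<m\<close> by simp
        qed
      qed
    qed
  qed
  then show ?case by blast
qed


context qes begin

lemma hermD: assumes "khermitian n d Y" "x\<in>B" "y\<in>B" shows "Y x y = cnj (Y y x)"
proof -
  have "\<forall>x\<in>B. \<forall>y\<in>B. Y x y = cnj (Y y x)" using assms(1) by (simp only: khermitian_def)
  from this assms(2) have "\<forall>y\<in>B. Y x y = cnj (Y y x)" by (rule bspec)
  from this assms(3) show ?thesis by (rule bspec)
qed


lemma basis_Suc_split: "(\<Sum>x\<in>basis (Suc k) d. G x) = (\<Sum>a<d k. \<Sum>z\<in>basis k d. G (z(k:=a)))"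
proof -
  have "basis (Suc k) d = PiE (insert k {..<k}) (\<lambda>j. {..<d j})" by (simp add: basis_def lessThan_Suc)
  then show ?thesis unfolding basis_def by (simp add: sum_PiE_insert)
qed

lemma prod_Suc_split: "prod_state (Suc k) \<rho> (z(k:=a)) (w(k:=b)) = \<rho> k a b * prod_state k \<rho> z w"
proof -
  have "prod_state (Suc k) \<rho> (z(k:=a)) (w(k:=b)) = (\<Prod>j<k. \<rho> j ((z(k:=a)) j) ((w(k:=b)) j)) * \<rho> k a b"
    unfolding prod_state_def by (simp add: prod.lessThan_Suc)
  also have "(\<Prod>j<k. \<rho> j ((z(k:=a)) j) ((w(k:=b)) j)) = prod_state k \<rho> z w"
    unfolding prod_state_def by (rule prod.cong) auto
  finally show ?thesis by (metis mult.commute)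
qed

lemma tensor_pos: "k \<le> n \<Longrightarrow> 0 \<le> Re (\<Sum>x\<in>basis k d. \<Sum>y\<in>basis k d. cnj (v x) * prod_state k \<rho> x y * v y)"
proof (induction k arbitrary: v)
  case 0
  have b0: "basis 0 d = {(\<lambda>_. undefined)}" by (simp add: basis_def)
  have "cnj (v (\<lambda>_. undefined)) * v (\<lambda>_. undefined) = complex_of_real ((cmod (v (\<lambda>_. undefined)))^2)"
    using complex_norm_square[of "v (\<lambda>_. undefined)"] by (simp only: mult.commute)
  then show ?case unfolding b0 by (simp add: prod_state_def)
next
  case (Suc k)
  have k: "k < n" using Suc.prems by simp
  have hk: "\<forall>a<d k. \<forall>b<d k. \<rho> k a b = cnj (\<rho> k b a)" using herm[OF k] by blast
  have pk: "\<forall>v. 0 \<le> Re (Qf (d k) (\<rho> k) v)" unfolding Qf_def using psd[OF k] by blast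
  obtain u where u: "\<forall>a<d k. \<forall>b<d k. \<rho> k a b = (\<Sum>l<d k. u l a * cnj (u l b))"
    using chol[OF hk pk] by blast
  define Bk where "Bk = basis k d"
  define f where "f l w = (\<Sum>b<d k. cnj (u l b) * v (w(k:=b)))" for l w
  define T where "T l z w a b = u l a * cnj (u l b) * (cnj (v (z(k:=a))) * prod_state k \<rho> z w * v (w(k:=b)))" for l z w a b
  have "(\<Sum>x\<in>basis (Suc k) d. \<Sum>y\<in>basis (Suc k) d. cnj (v x) * prod_state (Suc k) \<rho> x y * v y)
      = (\<Sum>a<d k. \<Sum>z\<in>Bk. \<Sum>b<d k. \<Sum>w\<in>Bk. cnj (v (z(k:=a))) * (\<rho> k a b * prod_state k \<rho> z w) * v (w(k:=b)))"
    unfolding Bk_def by (simp add: basis_Suc_split prod_Suc_split)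
  also have "\<dots> = (\<Sum>z\<in>Bk. \<Sum>w\<in>Bk. \<Sum>a<d k. \<Sum>b<d k. cnj (v (z(k:=a))) * (\<rho> k a b * prod_state k \<rho> z w) * v (w(k:=b)))"
    by (rule sum_reorder)
  also have "\<dots> = (\<Sum>z\<in>Bk. \<Sum>w\<in>Bk. \<Sum>a<d k. \<Sum>b<d k. \<Sum>l<d k. T l z w a b)"
  proof (intro sum.cong refl)
    fix z w a b assume a: "a \<in> {..<d k}" and b: "b \<in> {..<d k}"
    then have "\<rho> k a b = (\<Sum>l<d k. u l a * cnj (u l b))" using u by simp
    then show "cnj (v (z(k:=a))) * (\<rho> k a b * prod_state k \<rho> z w) * v (w(k:=b)) = (\<Sum>l<d k. T l z w a b)"
      unfolding T_def by (simp add: sum_distrib_left sum_distrib_right mult_ac)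
  qed
  also have "\<dots> = (\<Sum>z\<in>Bk. \<Sum>w\<in>Bk. \<Sum>l<d k. \<Sum>a<d k. \<Sum>b<d k. T l z w a b)"
    by (rule sum.cong[OF refl], rule sum.cong[OF refl], rule sum_rot3)
  also have "\<dots> = (\<Sum>l<d k. \<Sum>z\<in>Bk. \<Sum>w\<in>Bk. \<Sum>a<d k. \<Sum>b<d k. T l z w a b)"
    by (rule sum_rot3)
  also have "\<dots> = (\<Sum>l<d k. \<Sum>z\<in>Bk. \<Sum>w\<in>Bk. cnj (f l z) * prod_state k \<rho> z w * f l w)"
  proof (intro sum.cong refl)
    fix l z w
    show "(\<Sum>a<d k. \<Sum>b<d k. T l z w a b) = cnj (f l z) * prod_state k \<rho> z w * f l w"
      unfolding T_def f_def by (simp add: cnj_sum sum_distrib_left sum_distrib_right mult_ac)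
  qed
  finally have eq: "(\<Sum>x\<in>basis (Suc k) d. \<Sum>y\<in>basis (Suc k) d. cnj (v x) * prod_state (Suc k) \<rho> x y * v y)
      = (\<Sum>l<d k. \<Sum>z\<in>Bk. \<Sum>w\<in>Bk. cnj (f l z) * prod_state k \<rho> z w * f l w)" .
  have "0 \<le> (\<Sum>l<d k. Re (\<Sum>z\<in>Bk. \<Sum>w\<in>Bk. cnj (f l z) * prod_state k \<rho> z w * f l w))"
  proof (rule sum_nonneg)
    fix l
    show "0 \<le> Re (\<Sum>z\<in>Bk. \<Sum>w\<in>Bk. cnj (f l z) * prod_state k \<rho> z w * f l w)"
      unfolding Bk_def using Suc.IH[of "f l"] Suc.prems by simp
  qed
  then show ?case unfolding eq by (simp add: Re_sum)
qed

lemma pos_proved: assumes h: "khermitian n d Z" shows "0 \<le> Re (bil Z Z)"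
proof -
  have "bil Z Z = (\<Sum>x\<in>B. \<Sum>z\<in>B. \<Sum>w\<in>B. prod_state n \<rho> x z * Z z w * Z w x)" by (rule bil_eq)
  also have "\<dots> = (\<Sum>w\<in>B. \<Sum>x\<in>B. \<Sum>z\<in>B. prod_state n \<rho> x z * Z z w * Z w x)" by (rule sum_rot3)
  also have "\<dots> = (\<Sum>w\<in>B. \<Sum>x\<in>B. \<Sum>z\<in>B. cnj (Z x w) * prod_state n \<rho> x z * Z z w)"
  proof (intro sum.cong refl)
    fix w x z assume w: "w \<in> B" and x: "x \<in> B"
    have "Z w x = cnj (Z x w)" by (rule hermD[OF h w x])
    then show "prod_state n \<rho> x z * Z z w * Z w x = cnj (Z x w) * prod_state n \<rho> x z * Z z w"
      by (simp add: mult_ac)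
  qed
  finally have eq: "bil Z Z = (\<Sum>w\<in>B. \<Sum>x\<in>B. \<Sum>z\<in>B. cnj (Z x w) * prod_state n \<rho> x z * Z z w)" .
  have "0 \<le> (\<Sum>w\<in>B. Re (\<Sum>x\<in>B. \<Sum>z\<in>B. cnj (Z x w) * prod_state n \<rho> x z * Z z w))"
  proof (rule sum_nonneg)
    fix w
    show "0 \<le> Re (\<Sum>x\<in>B. \<Sum>z\<in>B. cnj (Z x w) * prod_state n \<rho> x z * Z z w)"
      using tensor_pos[of n "\<lambda>z. Z z w"] by simp
  qed
  then show ?thesis unfolding eq by (simp add: Re_sum)
qed

end

primrec Pit :: "(nat\<Rightarrow>nat) \<Rightarrow> (nat\<Rightarrow>nat\<Rightarrow>nat\<Rightarrow>complex) \<Rightarrow> nat \<Rightarrow> kop \<Rightarrow> kop" where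
  "Pit d \<rho> 0 Y = Y"
| "Pit d \<rho> (Suc j) Y = cond_exp d \<rho> j (Pit d \<rho> j Y)"

context qes begin

abbreviation "P \<equiv> Pit d \<rho>"

lemma triv_P: "j < k \<Longrightarrow> triv j (P k Y)"
proof (induction k)
  case 0 then show ?case by simp
next
  case (Suc k)
  show ?case
  proof (cases "j = k")
    case True then show ?thesis by (simp add: triv_cond)
  next
    case False then have "j<k" using Suc.prems by simp
    then show ?thesis using Suc.IH False by (simp add: triv_cond_other)
  qed
qed

lemma diff_P: "j \<le> k \<Longrightarrow> diff_op d \<rho> k (P j Y) = P j (diff_op d \<rho> k Y)"
proof (induction j)
  case 0 show ?case by simp
next
  case (Suc j)
  have jk: "k \<noteq> j" "j \<le> k" using Suc.prems by auto
  have "diff_op d \<rho> k (P (Suc j) Y) = (\<lambda>x y. E j (P j Y) x y - E k (E j (P j Y)) x y)"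
    by (simp add: diff_op_def)
  also have "\<dots> = (\<lambda>x y. E j (P j Y) x y - E j (E k (P j Y)) x y)" by (simp add: cond_comm[OF jk(1)])
  also have "\<dots> = E j (diff_op d \<rho> k (P j Y))" by (simp add: diff_op_def cond_diff)
  also have "\<dots> = E j (P j (diff_op d \<rho> k Y))" using Suc.IH jk by simp
  finally show ?case by simp
qed


lemma herm_cond: assumes i: "i<n" and h: "khermitian n d Y" shows "khermitian n d (E i Y)"
  unfolding khermitian_def
proof (intro ballI)
  fix x y assume x: "x \<in> B" and y: "y \<in> B"
  show "E i Y x y = cnj (E i Y y x)"
  proof (cases "x i = y i")
    case True
    have hh: "cnj (\<rho> i a b * Y (y(i:=b)) (x(i:=a))) = \<rho> i b a * Y (x(i:=a)) (y(i:=b))"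
      if "a < d i" "b < d i" for a b
    proof -
      have "Y (x(i:=a)) (y(i:=b)) = cnj (Y (y(i:=b)) (x(i:=a)))"
        by (rule hermD[OF h upd_inB2[OF x i that(1)] upd_inB2[OF y i that(2)]])
      moreover have "\<rho> i b a = cnj (\<rho> i a b)" using herm[OF i that(2) that(1)] .
      ultimately show ?thesis by simp
    qed
    have "cnj (E i Y y x) = (\<Sum>a<d i. \<Sum>b<d i. cnj (\<rho> i a b * Y (y(i:=b)) (x(i:=a))))"
      using True by (simp add: cond_exp_def cnj_sum)
    also have "\<dots> = (\<Sum>a<d i. \<Sum>b<d i. \<rho> i b a * Y (x(i:=a)) (y(i:=b)))"
      by (intro sum.cong refl, rule hh; simp)
    also have "\<dots> = (\<Sum>b<d i. \<Sum>a<d i. \<rho> i b a * Y (x(i:=a)) (y(i:=b)))"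
      by (rule sum.swap)
    also have "\<dots> = E i Y x y" using True by (simp add: cond_exp_def)
    finally show ?thesis by simp
  qed (simp add: cond_exp_def)
qed

lemma herm_diff: assumes hA: "khermitian n d A" and hC: "khermitian n d C"
  shows "khermitian n d (\<lambda>x y. A x y - C x y)"
  unfolding khermitian_def
proof (intro ballI)
  fix x y assume x: "x\<in>B" and y: "y\<in>B"
  show "A x y - C x y = cnj (A y x - C y x)"
    by (simp only: hermD[OF hA x y] hermD[OF hC x y] complex_cnj_diff)
qed

lemma herm_P: "j \<le> n \<Longrightarrow> khermitian n d Y \<Longrightarrow> khermitian n d (P j Y)"
proof (induction j)
  case 0 then show ?case by simp
next
  case (Suc j)
  then have "j < n" "khermitian n d (P j Y)" by auto
  then show ?case unfolding Pit.simps by (rule herm_cond)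
qed

lemma expect_P: "j \<le> n \<Longrightarrow> expect n d (prod_state n \<rho>) (P j Y) = expect n d (prod_state n \<rho>) Y"
proof (induction j)
  case 0 then show ?case by simp
next
  case (Suc j)
  then have "j < n" "expect n d (prod_state n \<rho>) (P j Y) = expect n d (prod_state n \<rho>) Y" by auto
  then show ?case unfolding Pit.simps by (simp only: expect_cond)
qed

lemma pos: "khermitian n d Z \<Longrightarrow> 0 \<le> Re (bil Z Z)"
  by (rule pos_proved)

lemma contraction: assumes i: "i<n" and h: "khermitian n d W"
  shows "Re (bil (E i W) (E i W)) \<le> Re (bil W W)"
proof -
  define U where "U = E i W"
  define V where "V = (\<lambda>x y. W x y - U x y)"
  have W: "W = (\<lambda>x y. U x y + V x y)" by (simp add: V_def)
  have EV: "E i V = (\<lambda>x y. 0)" unfolding V_def U_def by (simp add: cond_diff cond_idem[OF i])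
  have tU: "triv i U" unfolding U_def by (rule triv_cond)
  have hV: "khermitian n d V" unfolding V_def U_def by (rule herm_diff[OF h herm_cond[OF i h]])
  have "bil W W = bil U U + bil U V + (bil V U + bil V V)"
    unfolding W by (simp add: bil_add_left bil_add_right)
  also have "\<dots> = bil U U + bil V V" using orth[OF i tU EV] by simp
  finally have "Re (bil W W) = Re (bil U U) + Re (bil V V)" by simp
  then show ?thesis using pos[OF hV] unfolding U_def by simp
qed

lemma contraction_P: "j \<le> n \<Longrightarrow> khermitian n d W \<Longrightarrow> Re (bil (P j W) (P j W)) \<le> Re (bil W W)"
proof (induction j)
  case 0 then show ?case by simp
next
  case (Suc j)
  have "Re (bil (P (Suc j) W) (P (Suc j) W)) \<le> Re (bil (P j W) (P j W))"
    using contraction[of j "P j W"] herm_P[of j W] Suc.prems by simp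
  also have "\<dots> \<le> Re (bil W W)" using Suc by simp
  finally show ?case .
qed

end

context qes begin

lemma trivD1: "triv i A \<Longrightarrow> x i \<noteq> y i \<Longrightarrow> A x y = 0" unfolding triv_def by blast
lemma trivD2: "triv i A \<Longrightarrow> A (x(i:=b)) (y(i:=b)) = A (x(i:=c)) (y(i:=c))" unfolding triv_def by blast

lemma trace1: "(\<Sum>x\<in>B. prod_state n \<rho> x x) = 1"
proof -
  have "(\<Prod>i<n. \<Sum>a<d i. \<rho> i a a) = (\<Sum>g\<in>B. \<Prod>i<n. \<rho> i (g i) (g i))"
    unfolding basis_def by (rule prod_sum_PiE) auto
  moreover have "(\<Prod>i<n. \<Sum>a<d i. \<rho> i a a) = 1" by (rule prod.neutral) (simp add: tr1)
  ultimately show ?thesis by (simp add: prod_state_def)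
qed

lemma expect_scalar: "expect n d (prod_state n \<rho>) (\<lambda>x y. if x = y then e else 0) = e"
proof -
  have "expect n d (prod_state n \<rho>) (\<lambda>x y. if x = y then e else 0) = (\<Sum>x\<in>B. prod_state n \<rho> x x * e)"
    unfolding expect_eq
  proof (rule sum.cong[OF refl])
    fix x assume "x \<in> B"
    then show "(\<Sum>z\<in>B. prod_state n \<rho> x z * (if z = x then e else 0)) = prod_state n \<rho> x x * e"
      by (subst sum_single[where cc=x]) (auto simp: finB)
  qed
  also have "\<dots> = e" using trace1 by (simp add: sum_distrib_right[symmetric])
  finally show ?thesis .
qed

lemma scalar_diag: assumes t: "\<forall>j<n. triv j M" and x: "x \<in> B"
  shows "M x x = M (\<lambda>j. if j < n then 0 else undefined) (\<lambda>j. if j < n then 0 else undefined)"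
proof -
  define yk where "yk k = (\<lambda>j. if j < k then 0 else x j)" for k :: nat
  have "k \<le> n \<Longrightarrow> M x x = M (yk k) (yk k)" for k
  proof (induction k)
    case 0 then show ?case by (simp add: yk_def)
  next
    case (Suc k)
    have tk: "triv k M" using t Suc.prems by simp
    have e1: "yk (Suc k) = (yk k)(k := 0)" by (auto simp: yk_def)
    have e2: "(yk k)(k := yk k k) = yk k" by simp
    have "M ((yk k)(k := 0)) ((yk k)(k := 0)) = M ((yk k)(k := yk k k)) ((yk k)(k := yk k k))"
      by (rule trivD2[OF tk])
    then have "M (yk (Suc k)) (yk (Suc k)) = M (yk k) (yk k)" unfolding e1 e2 .
    then show ?case using Suc by simp
  qed
  then have "M x x = M (yk n) (yk n)" by simp
  moreover have "yk n = (\<lambda>j. if j < n then 0 else undefined)"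
    using x by (auto simp: yk_def basis_def PiE_def extensional_def)
  ultimately show ?thesis by simp
qed

lemma scalar_off: assumes t: "\<forall>j<n. triv j M" and x: "x \<in> B" and y: "y \<in> B" and xy: "x \<noteq> y"
  shows "M x y = 0"
proof -
  have "\<exists>j<n. x j \<noteq> y j"
  proof (rule ccontr)
    assume "\<not> (\<exists>j<n. x j \<noteq> y j)"
    then have "\<And>j. j \<in> {..<n} \<Longrightarrow> x j = y j" by auto
    moreover have "x \<in> extensional {..<n}" "y \<in> extensional {..<n}" using x y by (auto simp: basis_def PiE_def)
    ultimately have "x = y" by (intro extensionalityI) auto
    then show False using xy by simp
  qed
  then obtain j where "j<n" "x j \<noteq> y j" by blast
  then show ?thesis using t trivD1 by blast
qed

lemma scalar_vals: assumes t: "\<forall>j<n. triv j M"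
  defines "c \<equiv> M (\<lambda>j. if j < n then 0 else undefined) (\<lambda>j. if j < n then 0 else undefined)"
  shows "expect n d (prod_state n \<rho>) M = c" "bil M M = c^2"
proof -
  have MS: "M x y = (if x = y then c else 0)" if "x \<in> B" "y \<in> B" for x y
    using scalar_diag[OF t that(1)] scalar_off[OF t that] unfolding c_def by auto
  have "expect n d (prod_state n \<rho>) M = expect n d (prod_state n \<rho>) (\<lambda>x y. if x = y then c else 0)"
    by (rule expect_cong) (rule MS)
  then show "expect n d (prod_state n \<rho>) M = c" by (simp add: expect_scalar)
  have K: "kmult n d M M x y = (if x = y then c*c else 0)" if "x \<in> B" "y \<in> B" for x y
  proof -
    have "kmult n d M M x y = (\<Sum>w\<in>B. (if x = w then c else 0) * (if w = y then c else 0))"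
      unfolding kmult_def using that by (intro sum.cong refl) (simp add: MS)
    also have "\<dots> = (if x = y then c*c else 0)"
      by (subst sum_single[where cc=x]) (use that in \<open>auto simp: finB\<close>)
    finally show ?thesis .
  qed
  have "bil M M = expect n d (prod_state n \<rho>) (\<lambda>x y. if x = y then c*c else 0)"
    by (rule expect_cong) (rule K)
  then show "bil M M = c^2" by (simp add: expect_scalar power2_eq_square)
qed

lemma main: assumes obs: "khermitian n d X"
  shows "Re (variance n d (prod_state n \<rho>) X) \<le> (\<Sum>i<n. Re (bil (diff_op d \<rho> i X) (diff_op d \<rho> i X)))"
proof -
  define M where "M = P n X"
  define \<Delta> where "\<Delta> k = (\<lambda>x y. P k X x y - P (Suc k) X x y)" for k
  have tel: "X = (\<lambda>x y. (\<Sum>k<n. \<Delta> k x y) + M x y)"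
  proof (intro ext)
    fix x y
    have "(\<Sum>k<n. \<Delta> k x y) = P 0 X x y - P n X x y" unfolding \<Delta>_def by (rule sum_lessThan_telescope')
    then show "X x y = (\<Sum>k<n. \<Delta> k x y) + M x y" by (simp add: M_def)
  qed
  have ED: "E k (\<Delta> k) = (\<lambda>x y. 0)" if "k<n" for k
    unfolding \<Delta>_def using that by (simp add: cond_diff cond_idem)
  have tD: "triv j (\<Delta> k)" if "j<k" for j k
    unfolding \<Delta>_def by (rule triv_diff) (use triv_P[of j k X] triv_P[of j "Suc k" X] that in auto)
  have tM: "triv j M" if "j<n" for j unfolding M_def using that by (rule triv_P)
  have offd: "bil (\<Delta> k) (\<Delta> l) = 0" if "k<n" "l<n" "k \<noteq> l" for k l
  proof (cases "k<l")
    case True then show ?thesis using orth(1)[OF that(1) tD[OF True] ED[OF that(1)]] by simp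
  next
    case False then have lk: "l<k" using that by simp
    then show ?thesis using orth(2)[OF that(2) tD[OF lk] ED[OF that(2)]] by simp
  qed
  have dm: "bil (\<Delta> k) M = 0" "bil M (\<Delta> k) = 0" if "k<n" for k
    using orth[OF that tM[OF that] ED[OF that]] by auto
  have diag: "(\<Sum>k<n. \<Sum>l<n. bil (\<Delta> k) (\<Delta> l)) = (\<Sum>k<n. bil (\<Delta> k) (\<Delta> k))"
  proof (rule sum.cong[OF refl])
    fix k assume k: "k \<in> {..<n}"
    show "(\<Sum>l<n. bil (\<Delta> k) (\<Delta> l)) = bil (\<Delta> k) (\<Delta> k)"
      by (rule sum_single) (use k offd in auto)
  qed
  have XX: "bil X X = (\<Sum>k<n. bil (\<Delta> k) (\<Delta> k)) + bil M M"
  proof -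
    have "bil X X = bil (\<lambda>x y. (\<Sum>k<n. \<Delta> k x y) + M x y) (\<lambda>x y. (\<Sum>k<n. \<Delta> k x y) + M x y)"
      by (rule arg_cong2[where f="\<lambda>F G. bil F G", OF tel tel])
    also have "\<dots> = (\<Sum>k<n. \<Sum>l<n. bil (\<Delta> k) (\<Delta> l)) + (\<Sum>k<n. bil (\<Delta> k) M) + ((\<Sum>l<n. bil M (\<Delta> l)) + bil M M)"
      by (simp only: bil_add_left bil_add_right bil_sum_left bil_sum_right)
    also have "\<dots> = (\<Sum>k<n. bil (\<Delta> k) (\<Delta> k)) + bil M M" using diag dm by simp
    finally show ?thesis .
  qed
  have cv: "expect n d (prod_state n \<rho>) M = M (\<lambda>j. if j < n then 0 else undefined) (\<lambda>j. if j < n then 0 else undefined)"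
     "bil M M = (M (\<lambda>j. if j < n then 0 else undefined) (\<lambda>j. if j < n then 0 else undefined))^2"
    using scalar_vals[of M] tM by auto
  have EX: "expect n d (prod_state n \<rho>) X = expect n d (prod_state n \<rho>) M"
    unfolding M_def by (simp add: expect_P)
  have var: "variance n d (prod_state n \<rho>) X = (\<Sum>k<n. bil (\<Delta> k) (\<Delta> k))"
    unfolding variance_def using XX cv EX by simp
  have Deq: "\<Delta> k = P k (diff_op d \<rho> k X)" for k
  proof -
    have "\<Delta> k = diff_op d \<rho> k (P k X)" unfolding \<Delta>_def diff_op_def by simp
    also have "\<dots> = P k (diff_op d \<rho> k X)" by (rule diff_P) simp
    finally show ?thesis .
  qed
  have hD: "khermitian n d (diff_op d \<rho> k X)" if "k<n" for k
    unfolding diff_op_def by (rule herm_diff[OF obs herm_cond[OF that obs]])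
  have "Re (variance n d (prod_state n \<rho>) X) = (\<Sum>k<n. Re (bil (\<Delta> k) (\<Delta> k)))"
    using var by (simp add: Re_sum)
  also have "\<dots> \<le> (\<Sum>k<n. Re (bil (diff_op d \<rho> k X) (diff_op d \<rho> k X)))"
  proof (rule sum_mono)
    fix k assume "k \<in> {..<n}"
    then show "Re (bil (\<Delta> k) (\<Delta> k)) \<le> Re (bil (diff_op d \<rho> k X) (diff_op d \<rho> k X))"
      unfolding Deq using contraction_P[of k "diff_op d \<rho> k X"] hD by simp
  qed
  finally show ?thesis .
qed

end

theorem theorem6p6:
  fixes n :: nat and d :: "nat \<Rightarrow> nat"
    and \<rho> :: "nat \<Rightarrow> nat \<Rightarrow> nat \<Rightarrow> complex" and X :: kop
  assumes dims: "\<forall>i<n. d i \<ge> 1"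
    and states: "\<forall>i<n. density_matrix (d i) (\<rho> i)"
    and obs: "khermitian n d X"
  shows "Re (variance n d (prod_state n \<rho>) X)
           \<le> (\<Sum>i<n. Re (expect n d (prod_state n \<rho>)
                    (kmult n d (diff_op d \<rho> i X) (diff_op d \<rho> i X))))"
proof -
  interpret qes n d \<rho> using states by unfold_locales
  show ?thesis using main[OF obs] by simp
qed

end
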